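(* Let $(G,* )$ be a topological group which has property ${\sf S}_c(\mathcal{O}_{\sf nbd},\mathcal{O})$ as well as the Hurewicz property. Then for any topological group $(H,* )$ satisfying ${\sf S}_c(\mathcal{O}_{\sf nbd},\Lambda)$, the product group $G\times H$ satisfies ${\sf S}_c(\mathcal{O}_{\sf nbd},\mathcal{O})$.
   Context: For a topological group $(G,* )$ with identity $e$ and a neighborhood $U$ of $e$, $\mathcal{O}(U)=\{x*U:x\in G\}$ and $\mathcal{O}_{\sf nbd}=\{\mathcal{O}(U):U\text{ a neighborhood of }e\}$. $\mathcal{O}$ is the collection of all open covers. An open cover is large if each point of the space is contained in infinitely many elements of the cover; $\Lambda$ denotes the collection of large open covers. A family $\mathcal{B}$ refines $\mathcal{A}$ if every member of $\mathcal{B}$ is contained in some member of $\mathcal{A}$. ${\sf S}_c(\mathcal{A},\mathcal{B})$: for each sequence $(A_n:n<\infty)$ of elements of $\mathcal{A}$ there is a sequence $(B_n:n<\infty)$ such that each $B_n$ is a pairwise disjoint family of open sets refining $A_n$ and $\bigcup_nB_n\in\mathcal{B}$. A space $X$ has the Hurewicz property if for each sequence $(\mathcal{U}_n:n<\infty)$ of open covers of $X$ there are finite $\mathcal{F}_n\subseteq\mathcal{U}_n$ such that for each $x\in X$ the set $\{n:x\notin\bigcup\mathcal{F}_n\}$ is finite. *)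

theory Defs
  imports "HOL-Analysis.Analysis"
begin

definition topological_group ::
  "'a topology \<Rightarrow> ('a \<Rightarrow> 'a \<Rightarrow> 'a) \<Rightarrow> 'a \<Rightarrow> ('a \<Rightarrow> 'a) \<Rightarrow> bool" where
  "topological_group X m e i \<longleftrightarrow>
     e \<in> topspace X \<and>
     (\<forall>x\<in>topspace X. \<forall>y\<in>topspace X. m x y \<in> topspace X) \<and>
     (\<forall>x\<in>topspace X. i x \<in> topspace X) \<and>
     (\<forall>x\<in>topspace X. \<forall>y\<in>topspace X. \<forall>z\<in>topspace X. m (m x y) z = m x (m y z)) \<and>
     (\<forall>x\<in>topspace X. m e x = x \<and> m x e = x) \<and>
     (\<forall>x\<in>topspace X. m (i x) x = e \<and> m x (i x) = e) \<and>
     continuous_map (prod_topology X X) X (\<lambda>(x, y). m x y) \<and>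
     continuous_map X X i"

definition nbhd :: "'a topology \<Rightarrow> 'a \<Rightarrow> 'a set \<Rightarrow> bool" where
  "nbhd X p U \<longleftrightarrow> U \<subseteq> topspace X \<and> (\<exists>V. openin X V \<and> p \<in> V \<and> V \<subseteq> U)"

definition open_cover :: "'a topology \<Rightarrow> 'a set set \<Rightarrow> bool" where
  "open_cover X \<U> \<longleftrightarrow> (\<forall>U\<in>\<U>. openin X U) \<and> topspace X \<subseteq> \<Union>\<U>"

definition large_cover :: "'a topology \<Rightarrow> 'a set set \<Rightarrow> bool" where
  "large_cover X \<U> \<longleftrightarrow> open_cover X \<U> \<and>
     (\<forall>x\<in>topspace X. infinite {U \<in> \<U>. x \<in> U})"

text \<open>The family
O(U) = {x*U : x in G}; B_n refines O(U_n) means each member of B_n lies in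
some translate x*U_n.\<close>
definition Sc_nbd :: "'a topology \<Rightarrow> ('a \<Rightarrow> 'a \<Rightarrow> 'a) \<Rightarrow> 'a \<Rightarrow> ('a set set \<Rightarrow> bool) \<Rightarrow> bool" where
  "Sc_nbd X m e \<B> \<longleftrightarrow>
     (\<forall>U :: nat \<Rightarrow> 'a set. (\<forall>n. nbhd X e (U n)) \<longrightarrow>
        (\<exists>B :: nat \<Rightarrow> 'a set set.
           (\<forall>n. pairwise disjnt (B n)) \<and>
           (\<forall>n. \<forall>V\<in>B n. openin X V) \<and>
           (\<forall>n. \<forall>V\<in>B n. \<exists>x\<in>topspace X. V \<subseteq> (m x) ` (U n)) \<and>
           \<B> (\<Union>n. B n)))"

definition hurewicz :: "'a topology \<Rightarrow> bool" where
  "hurewicz X \<longleftrightarrow>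
     (\<forall>\<U> :: nat \<Rightarrow> 'a set set. (\<forall>n. open_cover X (\<U> n)) \<longrightarrow>
        (\<exists>\<F> :: nat \<Rightarrow> 'a set set. (\<forall>n. finite (\<F> n) \<and> \<F> n \<subseteq> \<U> n) \<and>
           (\<forall>x\<in>topspace X. finite {n. x \<notin> \<Union>(\<F> n)})))"

definition prod_mult :: "('a \<Rightarrow> 'a \<Rightarrow> 'a) \<Rightarrow> ('b \<Rightarrow> 'b \<Rightarrow> 'b) \<Rightarrow> 'a \<times> 'b \<Rightarrow> 'a \<times> 'b \<Rightarrow> 'a \<times> 'b" where
  "prod_mult m1 m2 = (\<lambda>(x1, x2) (y1, y2). (m1 x1 y1, m2 x2 y2))"

end

theory Submission
  imports Defs
begin

lemma subsingleton_finite: "(\<forall>a\<in>S. \<forall>b\<in>S. a = b) \<Longrightarrow> finite S"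
proof (cases "S = {}")
  case False
  assume h: "\<forall>a\<in>S. \<forall>b\<in>S. a = b"
  then obtain a where "a \<in> S" using False by blast
  then have "S \<subseteq> {a}" using h by blast
  then show ?thesis using finite_subset by blast
qed simp

lemma large_infinite_idx:
  assumes disj: "\<And>m. pairwise disjnt (C m)"
    and inf: "infinite {U \<in> (\<Union>m. C m). y \<in> U}"
  shows "infinite {m. y \<in> \<Union>(C m)}"
proof
  assume fin: "finite {m. y \<in> \<Union>(C m)}"
  have sub: "{U \<in> (\<Union>m. C m). y \<in> U} \<subseteq> (\<Union>m\<in>{m. y \<in> \<Union>(C m)}. {U \<in> C m. y \<in> U})"
    by blast
  have "finite {U \<in> C m. y \<in> U}" for m
  proof (rule subsingleton_finite, intro ballI)
    fix a b assume "a \<in> {U \<in> C m. y \<in> U}" "b \<in> {U \<in> C m. y \<in> U}"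
    then show "a = b" using disj[of m] unfolding pairwise_def disjnt_def by blast
  qed
  then have "finite (\<Union>m\<in>{m. y \<in> \<Union>(C m)}. {U \<in> C m. y \<in> U})"
    using fin by blast
  then show False using inf sub finite_subset by blast
qed

theorem theorem3p5:
  fixes G :: "'a topology" and mG :: "'a \<Rightarrow> 'a \<Rightarrow> 'a" and eG :: 'a and iG :: "'a \<Rightarrow> 'a"
    and H :: "'b topology" and mH :: "'b \<Rightarrow> 'b \<Rightarrow> 'b" and eH :: 'b and iH :: "'b \<Rightarrow> 'b"
  assumes "topological_group G mG eG iG"
    and "Sc_nbd G mG eG (open_cover G)"
    and "hurewicz G"
    and "topological_group H mH eH iH"
    and "Sc_nbd H mH eH (large_cover H)"
  shows "Sc_nbd (prod_topology G H) (prod_mult mG mH) (eG, eH) (open_cover (prod_topology G H))"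
  unfolding Sc_nbd_def
proof (intro allI impI)
  fix W :: "nat \<Rightarrow> ('a \<times> 'b) set"
  assume W: "\<forall>n. nbhd (prod_topology G H) (eG, eH) (W n)"
  have "\<forall>n. \<exists>UV. openin G (fst UV) \<and> openin H (snd UV) \<and> eG \<in> fst UV \<and> eH \<in> snd UV
      \<and> fst UV \<times> snd UV \<subseteq> W n"
  proof
    fix n
    have Wn: "nbhd (prod_topology G H) (eG, eH) (W n)" using W by simp
    then obtain Q where Q: "openin (prod_topology G H) Q" "(eG, eH) \<in> Q" "Q \<subseteq> W n"
      unfolding nbhd_def by auto
    have h: "\<forall>x y. (x, y) \<in> Q \<longrightarrow> (\<exists>U V. openin G U \<and> openin H V \<and> x \<in> U \<and> y \<in> V \<and> U \<times> V \<subseteq> Q)"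
      using Q(1) by (simp only: openin_prod_topology_alt)
    obtain U0 V0 where UV0: "openin G U0" "openin H V0" "eG \<in> U0" "eH \<in> V0" "U0 \<times> V0 \<subseteq> Q"
      using h[rule_format, OF Q(2)] by auto
    show "\<exists>UV. openin G (fst UV) \<and> openin H (snd UV) \<and> eG \<in> fst UV \<and> eH \<in> snd UV
      \<and> fst UV \<times> snd UV \<subseteq> W n"
      using UV0 Q(3) by (intro exI[of _ "(U0, V0)"]) auto
  qed
  then obtain UV where UV0: "\<forall>n. openin G (fst (UV n)) \<and> openin H (snd (UV n)) \<and> eG \<in> fst (UV n)
      \<and> eH \<in> snd (UV n) \<and> fst (UV n) \<times> snd (UV n) \<subseteq> W n"
    by (rule choice[THEN exE])
  note UV = UV0[rule_format]
  define U where "U n = fst (UV n)" for n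
  define V where "V n = snd (UV n)" for n
  have Uo: "openin G (U n)" and Vo: "openin H (V n)" and eU: "eG \<in> U n" and eV: "eH \<in> V n"
    and UVW: "U n \<times> V n \<subseteq> W n" for n
    using UV[of n] by (auto simp: U_def V_def)
  have ScG: "\<forall>U :: nat \<Rightarrow> 'a set. (\<forall>n. nbhd G eG (U n)) \<longrightarrow>
        (\<exists>B :: nat \<Rightarrow> 'a set set.
           (\<forall>n. pairwise disjnt (B n)) \<and>
           (\<forall>n. \<forall>V\<in>B n. openin G V) \<and>
           (\<forall>n. \<forall>V\<in>B n. \<exists>x\<in>topspace G. V \<subseteq> (mG x) ` (U n)) \<and>
           open_cover G (\<Union>n. B n))"
    using assms(2) unfolding Sc_nbd_def by blast
  have ScH: "\<forall>U :: nat \<Rightarrow> 'b set. (\<forall>n. nbhd H eH (U n)) \<longrightarrow>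
        (\<exists>B :: nat \<Rightarrow> 'b set set.
           (\<forall>n. pairwise disjnt (B n)) \<and>
           (\<forall>n. \<forall>V\<in>B n. openin H V) \<and>
           (\<forall>n. \<forall>V\<in>B n. \<exists>x\<in>topspace H. V \<subseteq> (mH x) ` (U n)) \<and>
           large_cover H (\<Union>n. B n))"
    using assms(5) unfolding Sc_nbd_def by blast
  have "\<forall>m. \<exists>B :: nat \<Rightarrow> 'a set set.
           (\<forall>n. pairwise disjnt (B n)) \<and>
           (\<forall>n. \<forall>V\<in>B n. openin G V) \<and>
           (\<forall>n. \<forall>V\<in>B n. \<exists>x\<in>topspace G. V \<subseteq> (mG x) ` (U (prod_encode (m, n)))) \<and>
           open_cover G (\<Union>n. B n)"
  proof
    fix m
    have "\<forall>n. nbhd G eG (U (prod_encode (m, n)))"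
      using Uo eU openin_subset unfolding nbhd_def by blast
    then show "\<exists>B :: nat \<Rightarrow> 'a set set.
           (\<forall>n. pairwise disjnt (B n)) \<and>
           (\<forall>n. \<forall>V\<in>B n. openin G V) \<and>
           (\<forall>n. \<forall>V\<in>B n. \<exists>x\<in>topspace G. V \<subseteq> (mG x) ` (U (prod_encode (m, n)))) \<and>
           open_cover G (\<Union>n. B n)"
      using ScG[rule_format, of "\<lambda>n. U (prod_encode (m, n))"] by blast
  qed
  then obtain D :: "nat \<Rightarrow> nat \<Rightarrow> 'a set set" where D0: "\<forall>m.
           (\<forall>n. pairwise disjnt (D m n)) \<and>
           (\<forall>n. \<forall>V\<in>D m n. openin G V) \<and>
           (\<forall>n. \<forall>V\<in>D m n. \<exists>x\<in>topspace G. V \<subseteq> (mG x) ` (U (prod_encode (m, n)))) \<and>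
           open_cover G (\<Union>n. D m n)"
    by (rule choice[THEN exE])
  have Dd: "\<And>m n. pairwise disjnt (D m n)" and
    Do: "\<And>m n A. A \<in> D m n \<Longrightarrow> openin G A" and
    Dr: "\<And>m n A. A \<in> D m n \<Longrightarrow> \<exists>x\<in>topspace G. A \<subseteq> (mG x) ` (U (prod_encode (m, n)))" and
    Dc: "\<And>m. open_cover G (\<Union>n. D m n)"
    using D0 by blast+
  define Om where "Om m J = (\<Union>j\<in>{..J}. \<Union>(D m j))" for m J
  have cov: "open_cover G (range (Om m))" for m
  proof -
    have "openin G (Om m J)" for J
      unfolding Om_def using Do by (intro openin_Union) auto
    moreover have "topspace G \<subseteq> \<Union>(range (Om m))"
      using Dc[of m] unfolding open_cover_def Om_def by blast
    ultimately show ?thesis unfolding open_cover_def by blast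
  qed
  have hw: "\<forall>\<U> :: nat \<Rightarrow> 'a set set. (\<forall>n. open_cover G (\<U> n)) \<longrightarrow>
        (\<exists>\<F> :: nat \<Rightarrow> 'a set set. (\<forall>n. finite (\<F> n) \<and> \<F> n \<subseteq> \<U> n) \<and>
           (\<forall>x\<in>topspace G. finite {n. x \<notin> \<Union>(\<F> n)}))"
    using assms(3) by (simp only: hurewicz_def)
  have covall: "\<forall>m. open_cover G (range (Om m))" using cov by blast
  obtain F where F0: "(\<forall>n. finite (F n) \<and> F n \<subseteq> range (Om n)) \<and>
           (\<forall>x\<in>topspace G. finite {n. x \<notin> \<Union>(F n)})"
    using hw[rule_format, of "\<lambda>m. range (Om m)", OF cov] by (elim exE)
  have Ff: "\<And>m. finite (F m) \<and> F m \<subseteq> range (Om m)"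
    and Fx: "\<And>x. x \<in> topspace G \<Longrightarrow> finite {m. x \<notin> \<Union>(F m)}"
    using F0 by auto
  have "\<forall>m. \<exists>JS. finite JS \<and> F m = Om m ` JS"
  proof
    fix m show "\<exists>JS. finite JS \<and> F m = Om m ` JS"
      using Ff[of m] finite_subset_image[of "F m" "Om m" UNIV] by blast
  qed
  then obtain JS where JS0: "\<forall>m. finite (JS m) \<and> F m = Om m ` JS m" by (rule choice[THEN exE])
  note JS = JS0[rule_format]
  define J where "J m = Max (insert 0 (JS m))" for m
  have FJ: "x \<in> \<Union>(F m) \<Longrightarrow> \<exists>j\<le>J m. \<exists>A\<in>D m j. x \<in> A" for x m
  proof -
    assume "x \<in> \<Union>(F m)"
    then obtain K where K: "K \<in> JS m" "x \<in> Om m K" using JS by auto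
    have "K \<le> J m" unfolding J_def using JS K(1) by simp
    obtain j A where "j \<le> K" "A \<in> D m j" "x \<in> A" using K(2) unfolding Om_def by auto
    then show ?thesis using \<open>K \<le> J m\<close> order_trans by blast
  qed
  define V' where "V' m = (\<Inter>j\<in>{..J m}. V (prod_encode (m, j)))" for m
  have "nbhd H eH (V' m)" for m
  proof -
    have "openin H (V' m)" unfolding V'_def
      using Vo by (intro openin_Inter) auto
    moreover have "eH \<in> V' m" unfolding V'_def using eV by auto
    ultimately show ?thesis unfolding nbhd_def using openin_subset by blast
  qed
  then have "\<And>m. nbhd H eH (V' m)" by blast
  from ScH[rule_format, of V', OF this] obtain C :: "nat \<Rightarrow> 'b set set" where C0:
    "(\<forall>n. pairwise disjnt (C n)) \<and>
           (\<forall>n. \<forall>V\<in>C n. openin H V) \<and>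
           (\<forall>n. \<forall>V\<in>C n. \<exists>x\<in>topspace H. V \<subseteq> (mH x) ` (V' n)) \<and>
           large_cover H (\<Union>n. C n)"
    by (elim exE)
  have Cd: "\<And>m. pairwise disjnt (C m)" and
    Co: "\<And>m A. A \<in> C m \<Longrightarrow> openin H A" and
    Cr: "\<And>m A. A \<in> C m \<Longrightarrow> \<exists>x\<in>topspace H. A \<subseteq> (mH x) ` (V' m)" and
    Cc: "large_cover H (\<Union>m. C m)"
    using C0 by blast+
  define B where "B n = {A \<times> Cc | A Cc. \<exists>m j. n = prod_encode (m, j) \<and> j \<le> J m \<and> A \<in> D m j \<and> Cc \<in> C m}" for n
  show "\<exists>B :: nat \<Rightarrow> ('a \<times> 'b) set set.
           (\<forall>n. pairwise disjnt (B n)) \<and>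
           (\<forall>n. \<forall>V\<in>B n. openin (prod_topology G H) V) \<and>
           (\<forall>n. \<forall>V\<in>B n. \<exists>x\<in>topspace (prod_topology G H). V \<subseteq> (prod_mult mG mH x) ` (W n)) \<and>
           open_cover (prod_topology G H) (\<Union>n. B n)"
  proof (intro exI[of _ B] conjI allI ballI)
    fix n
    show "pairwise disjnt (B n)"
    proof (unfold pairwise_def, intro ballI impI)
      fix P Q assume P: "P \<in> B n" and Q: "Q \<in> B n" and PQ: "P \<noteq> Q"
      obtain A Cc m j where 1: "P = A \<times> Cc" "n = prod_encode (m, j)" "A \<in> D m j" "Cc \<in> C m"
        using P unfolding B_def by blast
      obtain A' Cc' m' j' where 2: "Q = A' \<times> Cc'" "n = prod_encode (m', j')" "A' \<in> D m' j'" "Cc' \<in> C m'"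
        using Q unfolding B_def by blast
      have "m = m'" "j = j'" using 1(2) 2(2) prod_encode_eq by auto
      then have "disjnt A A' \<or> disjnt Cc Cc'"
        using 1 2 PQ Dd[of m j] Cd[of m] unfolding pairwise_def by auto
      then show "disjnt P Q" using 1(1) 2(1) unfolding disjnt_def by auto
    qed
  next
    fix n P assume P: "P \<in> B n"
    obtain A Cc m j where 1: "P = A \<times> Cc" "n = prod_encode (m, j)" "j \<le> J m" "A \<in> D m j" "Cc \<in> C m"
      using P unfolding B_def by blast
    show "openin (prod_topology G H) P"
      unfolding 1(1) openin_prod_Times_iff using Do[OF 1(4)] Co[OF 1(5)] by blast
    obtain a where a: "a \<in> topspace G" "A \<subseteq> mG a ` U n" using Dr[OF 1(4)] 1(2) by blast
    obtain b where b: "b \<in> topspace H" "Cc \<subseteq> mH b ` V' m" using Cr[OF 1(5)] by blast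
    have "V' m \<subseteq> V n" unfolding V'_def 1(2) using 1(3) by blast
    have "P \<subseteq> prod_mult mG mH (a, b) ` W n"
    proof
      fix z assume "z \<in> P"
      then obtain p q where z: "z = (p, q)" "p \<in> A" "q \<in> Cc" using 1(1) by blast
      obtain u where u: "u \<in> U n" "p = mG a u" using a z by blast
      obtain v where v: "v \<in> V n" "q = mH b v" using b z \<open>V' m \<subseteq> V n\<close> by blast
      have "(u, v) \<in> W n" using UVW u v by blast
      moreover have "z = prod_mult mG mH (a, b) (u, v)" unfolding prod_mult_def z u v by simp
      ultimately show "z \<in> prod_mult mG mH (a, b) ` W n" by blast
    qed
    then show "\<exists>x\<in>topspace (prod_topology G H). P \<subseteq> prod_mult mG mH x ` W n"
      using a(1) b(1) by auto
  next
    show "open_cover (prod_topology G H) (\<Union>n. B n)"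
      unfolding open_cover_def
    proof (intro conjI ballI subsetI)
      fix P assume "P \<in> (\<Union>n. B n)"
      then obtain A Cc m j where 1: "P = A \<times> Cc" "A \<in> D m j" "Cc \<in> C m"
        unfolding B_def by blast
      show "openin (prod_topology G H) P"
        unfolding 1(1) openin_prod_Times_iff using Do[OF 1(2)] Co[OF 1(3)] by blast
    next
      fix z assume "z \<in> topspace (prod_topology G H)"
      then obtain x y where z: "z = (x, y)" "x \<in> topspace G" "y \<in> topspace H" by auto
      have "infinite {U \<in> (\<Union>m. C m). y \<in> U}" using Cc z(3) unfolding large_cover_def by blast
      then have inf: "infinite {m. y \<in> \<Union>(C m)}" by (rule large_infinite_idx[OF Cd])
      have fin: "finite {m. x \<notin> \<Union>(F m)}" using Fx z(2) .
      have inf2: "infinite ({m. y \<in> \<Union>(C m)} - {m. x \<notin> \<Union>(F m)})"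
        by (rule Diff_infinite_finite[OF fin inf])
      obtain m where "m \<in> {m. y \<in> \<Union>(C m)} - {m. x \<notin> \<Union>(F m)}"
        using infinite_imp_nonempty[OF inf2] by blast
      then have m: "y \<in> \<Union>(C m)" "x \<in> \<Union>(F m)" by auto
      obtain j A where jA: "j \<le> J m" "A \<in> D m j" "x \<in> A" using FJ[OF m(2)] by blast
      obtain Cc where Cc: "Cc \<in> C m" "y \<in> Cc" using m(1) by blast
      have "\<exists>A' Cc'. A \<times> Cc = A' \<times> Cc' \<and> (\<exists>m' j'. prod_encode (m, j) = prod_encode (m', j') \<and> j' \<le> J m' \<and> A' \<in> D m' j' \<and> Cc' \<in> C m')"
        using jA Cc by blast
      then have inB: "A \<times> Cc \<in> B (prod_encode (m, j))" unfolding B_def by simp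
      have "z \<in> A \<times> Cc" using z jA Cc by simp
      then show "z \<in> \<Union>(\<Union>n. B n)" using inB by blast
    qed
  qed
qed

end
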